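(* Let $m,n,r$ be positive integers with $r\le n\le m$. Let $X\in\mathbb C^{m\times n}$ have rank $n$, and write $X=\begin{bmatrix}Y\\ \widetilde Y\end{bmatrix}$ with $Y\in\mathbb C^{r\times n}$ of rank $r$ and $\widetilde Y\in\mathbb C^{(m-r)\times n}$. Let $\Pi_X:=X(X^*X)^{-1}X^*$ and let $\Pi_X^{[r],[r]}$ be its top-left $r\times r$ submatrix. Then $\Pi_X^{[r],[r]}=I_r$ if and only if $\mathrm{colspan}(\widetilde Y)=\mathrm{colspan}(\widetilde YA)$ for some matrix $A$ whose column space equals $\ker Y$.
   Context: $\mathrm{colspan}(B)$ denotes the column space of a matrix $B$. *)

theory Defs
  imports "Jordan_Normal_Form.Schur_Decomposition" "Jordan_Normal_Form.Gauss_Jordan_Elimination"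
    "Jordan_Normal_Form.DL_Rank" "Jordan_Normal_Form.DL_Submatrix" "Jordan_Normal_Form.Matrix_Kernel"
begin

definition colspan :: "'a::field mat \<Rightarrow> 'a vec set" where
  "colspan B = vec_space.col_space (dim_row B) B"

definition mrank :: "'a::field mat \<Rightarrow> nat" where
  "mrank B = vec_space.rank (dim_row B) B"

definition proj_mat :: "complex mat \<Rightarrow> complex mat" where
  "proj_mat X = X * the (mat_inverse (mat_adjoint X * X)) * mat_adjoint X"

end

theory Submission
  imports Defs
begin


lemma rank_kernel_trivial:
  fixes X :: "'a::field mat"
  assumes X: "X \<in> carrier_mat m n" and rk: "vec_space.rank m X = n"
    and v: "v \<in> carrier_vec n" and Xv: "X *\<^sub>v v = 0\<^sub>v m"
  shows "v = 0\<^sub>v n"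
proof (rule ccontr)
  assume nz: "v \<noteq> 0\<^sub>v n"
  interpret vec_space "TYPE('a)" m .
  show False
  proof (cases "distinct (cols X)")
    case True
    then have "lin_indpt (set (cols X))" using full_rank_lin_indpt[OF X rk] by blast
    then show False using lin_depI[OF X v nz Xv True] by blast
  next
    case False
    obtain S where S: "maximal S (\<lambda>T. T \<subseteq> set (cols X) \<and> lin_indpt T)"
      using maximal_exists[of "(\<lambda>T. T \<subseteq> set (cols X) \<and> lin_indpt T)" "card (set (cols X))" "{}"]
      by (meson List.finite_set card_mono empty_iff empty_subsetI finite_lin_indpt2 rev_finite_subset)
    then have "card S \<le> card (set (cols X))" by (simp add: card_mono maximal_def)
    moreover have "card (set (cols X)) < n"
      using False X card_distinct card_length cols_length carrier_matD(2) nat_less_le by metis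
    ultimately show False using rank_card_indpt[OF X S] rk by simp
  qed
qed

lemma rank_surj:
  fixes Y :: "'a::field mat"
  assumes Y: "Y \<in> carrier_mat r n" and rk: "vec_space.rank r Y = r"
    and u: "u \<in> carrier_vec r"
  shows "\<exists>w\<in>carrier_vec n. Y *\<^sub>v w = u"
proof -
  interpret vec_space "TYPE('a)" r .
  obtain S where S: "maximal S (\<lambda>T. T \<subseteq> set (cols Y) \<and> lin_indpt T)"
    using maximal_exists[of "(\<lambda>T. T \<subseteq> set (cols Y) \<and> lin_indpt T)" "card (set (cols Y))" "{}"]
    by (meson List.finite_set card_mono empty_iff empty_subsetI finite_lin_indpt2 rev_finite_subset)
  have Ssub: "S \<subseteq> set (cols Y)" "lin_indpt S" using S by (auto simp: maximal_def)
  have cS: "card S = r" using rank_card_indpt[OF Y S] rk by simp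
  have colsc: "set (cols Y) \<subseteq> carrier_vec r" using Y cols_dim by blast
  have fS: "finite S" using Ssub(1) finite_subset by blast
  have "basis S"
    by (rule dim_li_is_basis) (use fin_dim fS Ssub colsc cS dim_is_n in auto)
  then have "span S = carrier_vec r" unfolding basis_def by auto
  moreover have "span S \<subseteq> span (set (cols Y))" using span_is_monotone Ssub(1) by metis
  ultimately have "col_space Y = carrier_vec r" unfolding col_space_def
    using span_is_subset2[OF colsc] by auto
  then have "u \<in> col_space Y" using u by simp
  then show ?thesis unfolding col_space_eq[OF Y] using Y by auto
qed


lemma append_rows_index:
  assumes "A \<in> carrier_mat a c" "B \<in> carrier_mat b c" "i < a + b" "j < c"
  shows "(A @\<^sub>r B) $$ (i,j) = (if i < a then A $$ (i,j) else B $$ (i - a, j))"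
  using assms unfolding append_rows_def by auto

lemma adj_carrier: "A \<in> carrier_mat a b \<Longrightarrow> mat_adjoint (A::complex mat) \<in> carrier_mat b a"
  unfolding mat_adjoint_def by auto

lemma adj_dims[simp]: "dim_row (mat_adjoint A) = dim_col A" "dim_col (mat_adjoint A) = dim_row A"
  unfolding mat_adjoint_def by auto

lemma adj_index[simp]: "i < dim_col A \<Longrightarrow> j < dim_row A \<Longrightarrow>
   mat_adjoint (A::complex mat) $$ (i,j) = cnj (A $$ (j,i))"
  unfolding mat_adjoint_def by (simp add: mat_of_rows_index)

lemma adj_mult:
  assumes A: "(A::complex mat) \<in> carrier_mat a b" and B: "B \<in> carrier_mat b c"
  shows "mat_adjoint (A * B) = mat_adjoint B * mat_adjoint A"
proof (rule eq_matI)
  fix i j assume i: "i < dim_row (mat_adjoint B * mat_adjoint A)" and j: "j < dim_col (mat_adjoint B * mat_adjoint A)"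
  then have i': "i < c" and j': "j < a" using A B by auto
  have "mat_adjoint (A * B) $$ (i,j) = cnj (\<Sum>k<b. A $$ (j,k) * B $$ (k,i))"
    using A B i' j' by (simp add: scalar_prod_def lessThan_atLeast0)
  also have "\<dots> = (\<Sum>k<b. cnj (B $$ (k,i)) * cnj (A $$ (j,k)))"
    by (simp add: mult.commute)
  also have "\<dots> = (mat_adjoint B * mat_adjoint A) $$ (i,j)"
    using A B i' j' by (simp add: scalar_prod_def lessThan_atLeast0)
  finally show "mat_adjoint (A * B) $$ (i,j) = (mat_adjoint B * mat_adjoint A) $$ (i,j)" .
qed (use A B in auto)

lemma adj_adj: "mat_adjoint (mat_adjoint (A::complex mat)) = A"
  by (rule eq_matI) auto

lemma adj_one: "mat_adjoint (1\<^sub>m n :: complex mat) = 1\<^sub>m n"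
  by (rule eq_matI) auto

lemma adj_append:
  assumes A: "(A::complex mat) \<in> carrier_mat a c" and B: "B \<in> carrier_mat b c"
  shows "mat_adjoint (A @\<^sub>r B) * (A @\<^sub>r B) = mat_adjoint A * A + mat_adjoint B * B"
proof (rule eq_matI)
  have C: "A @\<^sub>r B \<in> carrier_mat (a+b) c" using A B by auto
  fix i j assume i: "i < dim_row (mat_adjoint A * A + mat_adjoint B * B)"
    and j: "j < dim_col (mat_adjoint A * A + mat_adjoint B * B)"
  then have i': "i < c" and j': "j < c" using A B by auto
  define f where "f k = cnj ((A @\<^sub>r B) $$ (k,i)) * (A @\<^sub>r B) $$ (k,j)" for k
  have "(mat_adjoint (A @\<^sub>r B) * (A @\<^sub>r B)) $$ (i,j) = (\<Sum>k<a+b. f k)"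
    using C i' j' by (simp add: scalar_prod_def lessThan_atLeast0 f_def)
  also have "\<dots> = (\<Sum>k<a. f k) + (\<Sum>k<b. f (a + k))"
    by (simp add: sum.lessThan_Suc lessThan_atLeast0 sum.atLeastLessThan_concat[symmetric]
        sum.shift_bounds_nat_ivl[symmetric] add.commute[of a] sum.atLeastLessThan_concat)
  also have "(\<Sum>k<a. f k) = (\<Sum>k<a. cnj (A $$ (k,i)) * A $$ (k,j))"
    by (rule sum.cong) (use A B i' j' in \<open>auto simp: f_def append_rows_index\<close>)
  also have "(\<Sum>k<b. f (a + k)) = (\<Sum>k<b. cnj (B $$ (k,i)) * B $$ (k,j))"
    by (rule sum.cong) (use A B i' j' in \<open>auto simp: f_def append_rows_index\<close>)
  also have "(\<Sum>k<a. cnj (A $$ (k,i)) * A $$ (k,j)) + (\<Sum>k<b. cnj (B $$ (k,i)) * B $$ (k,j))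
     = (mat_adjoint A * A + mat_adjoint B * B) $$ (i,j)"
    using A B i' j' by (simp add: scalar_prod_def lessThan_atLeast0)
  finally show "(mat_adjoint (A @\<^sub>r B) * (A @\<^sub>r B)) $$ (i,j) = (mat_adjoint A * A + mat_adjoint B * B) $$ (i,j)" .
qed (insert carrier_matD[OF carrier_append_rows[OF A B]] carrier_matD[OF A] carrier_matD[OF B], simp_all)

lemma adj_zero:
  assumes A: "(A::complex mat) \<in> carrier_mat a c" and Z: "mat_adjoint A * A = 0\<^sub>m c c"
  shows "A = 0\<^sub>m a c"
proof (rule eq_matI)
  fix i j assume i: "i < dim_row (0\<^sub>m a c :: complex mat)" and j: "j < dim_col (0\<^sub>m a c :: complex mat)"
  then have i': "i < a" and j': "j < c" by auto
  have "(mat_adjoint A * A) $$ (j,j) = (\<Sum>k<a. cnj (A $$ (k,j)) * A $$ (k,j))"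
    using A j' by (simp add: scalar_prod_def lessThan_atLeast0)
  also have "\<dots> = of_real (\<Sum>k<a. (cmod (A $$ (k,j)))^2)"
    by (simp only: of_real_sum complex_norm_square) (simp add: mult.commute)
  finally have "of_real (\<Sum>k<a. (cmod (A $$ (k,j)))^2) = (0::complex)" using Z j' by simp
  then have "(\<Sum>k<a. (cmod (A $$ (k,j)))^2) = 0" by (simp only: of_real_eq_0_iff)
  then have "(cmod (A $$ (i,j)))^2 = 0" using i' by (subst (asm) sum_nonneg_eq_0_iff) auto
  then show "A $$ (i,j) = 0\<^sub>m a c $$ (i,j)" using i' j' by simp
qed (use A in auto)



lemma colspan_eq: "A \<in> carrier_mat a b \<Longrightarrow>
   colspan A = {y \<in> carrier_vec a. \<exists>x\<in>carrier_vec b. A *\<^sub>v x = y}"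
  unfolding colspan_def using vec_space.col_space_eq[of A a b] by auto

lemma P_block:
  assumes X: "X \<in> carrier_mat m n" and Y: "(Y::complex mat) \<in> carrier_mat r n" and Yt: "Yt \<in> carrier_mat (m - r) n"
    and Xd: "X = Y @\<^sub>r Yt" and M: "M \<in> carrier_mat n n" and rm: "r \<le> m"
    and i: "i < r" and j: "j < r"
  shows "(X * M * mat_adjoint X) $$ (i,j) = (Y * M * mat_adjoint Y) $$ (i,j)"
proof -
  have row: "row X i = row Y i" if "i < r" for i
    by (rule eq_vecI) (use that X Y Yt rm in \<open>auto simp: Xd append_rows_index\<close>)
  have rowa: "row (X * M) i = row (Y * M) i"
    by (rule eq_vecI) (use i X Y M rm row in \<open>auto\<close>)
  have cola: "col (mat_adjoint X) j = col (mat_adjoint Y) j"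
    by (rule eq_vecI) (use j X Y Yt rm in \<open>auto simp: Xd append_rows_index\<close>)
  show ?thesis using X Y M i j rm rowa cola by auto
qed



theorem lemma8:
  fixes m n r :: nat and X Y Yt :: "complex mat"
  assumes "0 < r" and "r \<le> n" and "n \<le> m"
    and "X \<in> carrier_mat m n" and "mrank X = n"
    and "Y \<in> carrier_mat r n" and "Yt \<in> carrier_mat (m - r) n"
    and "X = Y @\<^sub>r Yt" and "mrank Y = r"
  shows "submatrix (proj_mat X) {..<r} {..<r} = 1\<^sub>m r \<longleftrightarrow>
    (\<exists>k. \<exists>A \<in> carrier_mat n k. colspan A = mat_kernel Y \<and> colspan Yt = colspan (Yt * A))"
proof -
  note X = assms(4) and Y = assms(6) and Yt = assms(7) and Xd = assms(8)
  have rm: "r \<le> m" using assms by simp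
  have rkX: "vec_space.rank m X = n" using assms(5) X unfolding mrank_def by simp
  have rkY: "vec_space.rank r Y = r" using assms(9) Y unfolding mrank_def by simp
  have XH: "mat_adjoint X \<in> carrier_mat n m" using adj_carrier[OF X] .
  have YH: "mat_adjoint Y \<in> carrier_mat n r" using adj_carrier[OF Y] .
  have YtH: "mat_adjoint Yt \<in> carrier_mat n (m - r)" using adj_carrier[OF Yt] .
  define G where "G = mat_adjoint X * X"
  have G: "G \<in> carrier_mat n n" unfolding G_def using XH X by auto
  have Gsplit: "G = mat_adjoint Y * Y + mat_adjoint Yt * Yt"
    unfolding G_def Xd by (rule adj_append[OF Y Yt])
  have Gadj: "mat_adjoint G = G"
    unfolding G_def using adj_mult[OF XH X] adj_adj by simp
  have ker: "v = 0\<^sub>v n" if v: "v \<in> carrier_vec n" and Gv: "G *\<^sub>v v = 0\<^sub>v n" for v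
  proof -
    define V where "V = mat_of_cols n [v]"
    have V: "V \<in> carrier_mat n 1" unfolding V_def by auto
    have GV: "G * V = 0\<^sub>m n 1"
    proof (rule eq_matI)
      fix i j assume "i < dim_row (0\<^sub>m n 1 :: complex mat)" "j < dim_col (0\<^sub>m n 1 :: complex mat)"
      then have ij: "i < n" "j = 0" by auto
      have cV: "col V 0 = v" unfolding V_def using v by simp
      have "(G * V) $$ (i,j) = (G *\<^sub>v v) $ i"
        using ij G V cV by simp
      then show "(G * V) $$ (i,j) = 0\<^sub>m n 1 $$ (i,j)" using Gv ij by simp
    qed (use G V in auto)
    have XV: "X * V \<in> carrier_mat m 1" using X V by auto
    have "mat_adjoint (X * V) * (X * V) = mat_adjoint V * (G * V)"
      unfolding adj_mult[OF X V] G_def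
      using assoc_mult_mat[OF adj_carrier[OF V] XH XV] assoc_mult_mat[OF XH X V] by simp
    also have "\<dots> = 0\<^sub>m 1 1" unfolding GV by (rule right_mult_zero_mat[OF adj_carrier[OF V]])
    finally have "X * V = 0\<^sub>m m 1" using adj_zero[OF XV] by blast
    then have "X *\<^sub>v v = 0\<^sub>v m"
      using mat_vec_as_mat_mat_mult[OF X v] unfolding V_def by simp
    then show ?thesis using rank_kernel_trivial[OF X rkX v] by simp
  qed
  have detG: "det G \<noteq> 0" using det_0_iff_vec_prod_zero_field[OF G] ker by auto
  obtain M where Minv: "mat_inverse G = Some M"
  proof (cases "mat_inverse G")
    case None
    then show ?thesis using mat_inverse(1)[OF G None, where b="()"] det_non_zero_imp_unit[OF G detG, where b="()"] by blast
  qed auto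
  have GM: "G * M = 1\<^sub>m n" and MG: "M * G = 1\<^sub>m n" and M: "M \<in> carrier_mat n n"
    using mat_inverse(2)[OF G Minv] by auto
  have MH: "mat_adjoint M \<in> carrier_mat n n" using adj_carrier[OF M] .
  have Madj: "mat_adjoint M = M"
  proof -
    have "mat_adjoint M * G = 1\<^sub>m n"
      using adj_mult[OF G M] Gadj GM adj_one by simp
    have "mat_adjoint M * G * M = mat_adjoint M"
      unfolding assoc_mult_mat[OF MH G M] GM using right_mult_one_mat[OF MH] .
    moreover have "mat_adjoint M * G * M = M"
      unfolding \<open>mat_adjoint M * G = 1\<^sub>m n\<close> using left_mult_one_mat[OF M] .
    ultimately show ?thesis by simp
  qed
  define P where "P = X * M * mat_adjoint X"
  have Pdef: "proj_mat X = P" unfolding proj_mat_def P_def G_def[symmetric] Minv by simp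
  have P: "P \<in> carrier_mat m m" unfolding P_def using X M XH by auto
  have PX: "P * X = X"
  proof -
    have XM: "X * M \<in> carrier_mat m n" using X M by auto
    have "P * X = X * M * G" unfolding P_def G_def by (rule assoc_mult_mat[OF XM XH X])
    also have "\<dots> = X" unfolding assoc_mult_mat[OF X M G] MG using right_mult_one_mat[OF X] .
    finally show ?thesis .
  qed
  have dr: "dim_row P = m" "dim_col P = m" using P by auto
  have c: "{i. i < m \<and> i \<in> {..<r}} = {..<r}" using rm by auto
  have cr: "card {i. i < m \<and> i \<in> {..<r}} = r" unfolding c by simp
  have subdim: "submatrix P {..<r} {..<r} \<in> carrier_mat r r"
    unfolding carrier_mat_def mem_Collect_eq dim_submatrix dr cr by simp
  have pk: "pick {..<r} i = i" if "i < r" for i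
  proof -
    have "{a \<in> {..<r}. a < i} = {..<i}" using that by auto
    then show ?thesis using pick_card_in_set[of i "{..<r}"] that by simp
  qed
  have subidx: "submatrix P {..<r} {..<r} $$ (i,j) = P $$ (i,j)" if "i < r" "j < r" for i j
    using submatrix_index[of i P "{..<r}" j "{..<r}", unfolded dr cr] that pk by simp
  show ?thesis unfolding Pdef
  proof
    assume L: "submatrix P {..<r} {..<r} = 1\<^sub>m r"
    have Q: "Y * M * mat_adjoint Y = 1\<^sub>m r"
    proof (rule eq_matI)
      fix i j assume "i < dim_row (1\<^sub>m r :: complex mat)" "j < dim_col (1\<^sub>m r :: complex mat)"
      then have ij: "i < r" "j < r" by auto
      have "(Y * M * mat_adjoint Y) $$ (i,j) = P $$ (i,j)"
        unfolding P_def using P_block[OF X Y Yt Xd M rm ij] by simp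
      also have "\<dots> = 1\<^sub>m r $$ (i,j)" using subidx[OF ij] L by simp
      finally show "(Y * M * mat_adjoint Y) $$ (i,j) = 1\<^sub>m r $$ (i,j)" .
    qed (use Y M YH in auto)
    define V where "V = M * mat_adjoint Y"
    have V: "V \<in> carrier_mat n r" unfolding V_def using M YH by auto
    have YV: "Y * V = 1\<^sub>m r" unfolding V_def using assoc_mult_mat[OF Y M YH] Q by simp
    define W where "W = Yt * V"
    have W: "W \<in> carrier_mat (m - r) r" unfolding W_def using Yt V by auto
    have VH: "mat_adjoint V = Y * M" unfolding V_def adj_mult[OF M YH] adj_adj Madj ..
    have VHc: "mat_adjoint V \<in> carrier_mat r n" using adj_carrier[OF V] .
    have GV1: "G * V = mat_adjoint Y"
      unfolding V_def assoc_mult_mat[OF G M YH, symmetric] GM using left_mult_one_mat[OF YH] .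
    have E1: "mat_adjoint V * (G * V) = 1\<^sub>m r"
      unfolding GV1 VH using Q .
    have YtY: "mat_adjoint Yt * Yt \<in> carrier_mat n n" using YtH Yt by auto
    have YY: "mat_adjoint Y * Y \<in> carrier_mat n n" using YH Y by auto
    have GV2: "G * V = mat_adjoint Y + mat_adjoint Yt * W"
    proof -
      have "G * V = mat_adjoint Y * Y * V + mat_adjoint Yt * Yt * V"
        unfolding Gsplit by (rule add_mult_distrib_mat[OF YY YtY V])
      also have "mat_adjoint Y * Y * V = mat_adjoint Y"
        unfolding assoc_mult_mat[OF YH Y V] YV using right_mult_one_mat[OF YH] .
      also have "mat_adjoint Yt * Yt * V = mat_adjoint Yt * W"
        unfolding W_def by (rule assoc_mult_mat[OF YtH Yt V])
      finally show ?thesis .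
    qed
    have YtW: "mat_adjoint Yt * W \<in> carrier_mat n r" using YtH W by auto
    have E2: "mat_adjoint V * (G * V) = 1\<^sub>m r + mat_adjoint W * W"
    proof -
      have "mat_adjoint V * (G * V) = mat_adjoint V * mat_adjoint Y + mat_adjoint V * (mat_adjoint Yt * W)"
        unfolding GV2 by (rule mult_add_distrib_mat[OF VHc YH YtW])
      also have "mat_adjoint V * mat_adjoint Y = 1\<^sub>m r" unfolding VH using Q .
      also have "mat_adjoint V * (mat_adjoint Yt * W) = mat_adjoint W * W"
        unfolding W_def adj_mult[OF Yt V] by (rule assoc_mult_mat[OF VHc YtH W[unfolded W_def], symmetric])
      finally show ?thesis .
    qed
    have WW: "mat_adjoint W * W = 0\<^sub>m r r"
    proof (rule eq_matI)
      fix i j assume "i < dim_row (0\<^sub>m r r :: complex mat)" "j < dim_col (0\<^sub>m r r :: complex mat)"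
      then have ij: "i < r" "j < r" by auto
      have "(1\<^sub>m r + mat_adjoint W * W) $$ (i,j) = 1\<^sub>m r $$ (i,j)" using E1 E2 by simp
      then show "(mat_adjoint W * W) $$ (i,j) = 0\<^sub>m r r $$ (i,j)"
        using ij W adj_carrier[OF W] by simp
    qed (use W adj_carrier[OF W] in auto)
    have W0: "W = 0\<^sub>m (m - r) r" using adj_zero[OF W WW] .
    define A where "A = 1\<^sub>m n - V * Y"
    have VY: "V * Y \<in> carrier_mat n n" using V Y by auto
    have A: "A \<in> carrier_mat n n" unfolding A_def using minus_carrier_mat[OF VY] .
    have YA: "Y * A = 0\<^sub>m r n"
    proof -
      have "Y * A = Y * 1\<^sub>m n - Y * (V * Y)"
        unfolding A_def by (rule mult_minus_distrib_mat[OF Y one_carrier_mat VY])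
      also have "Y * (V * Y) = Y"
        unfolding assoc_mult_mat[OF Y V Y, symmetric] YV using left_mult_one_mat[OF Y] .
      finally show ?thesis using Y by simp
    qed
    have YtA: "Yt * A = Yt"
    proof -
      have "Yt * A = Yt * 1\<^sub>m n - Yt * (V * Y)"
        unfolding A_def by (rule mult_minus_distrib_mat[OF Yt one_carrier_mat VY])
      also have "Yt * (V * Y) = 0\<^sub>m (m - r) n"
        unfolding assoc_mult_mat[OF Yt V Y, symmetric] W_def[symmetric] W0 using left_mult_zero_mat[OF Y] .
      also have "Yt * 1\<^sub>m n = Yt" using right_mult_one_mat[OF Yt] .
      also have "Yt - 0\<^sub>m (m - r) n = Yt" by (rule eq_matI) (use Yt in auto)
      finally show ?thesis .
    qed
    have cA: "colspan A = mat_kernel Y"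
    proof
      show "colspan A \<subseteq> mat_kernel Y"
      proof
        fix y assume "y \<in> colspan A"
        then obtain x where x: "x \<in> carrier_vec n" and y: "y = A *\<^sub>v x" unfolding colspan_eq[OF A] by auto
        have "Y *\<^sub>v y = (Y * A) *\<^sub>v x" unfolding y using assoc_mult_mat_vec[OF Y A x] by simp
        also have "\<dots> = 0\<^sub>v r" unfolding YA using x by auto
        finally show "y \<in> mat_kernel Y" using mat_kernelI[OF Y] y A x by auto
      qed
    next
      show "mat_kernel Y \<subseteq> colspan A"
      proof
        fix y assume yk: "y \<in> mat_kernel Y"
        then have y: "y \<in> carrier_vec n" and Yy: "Y *\<^sub>v y = 0\<^sub>v r" using mat_kernelD[OF Y] by auto
        have V0: "V *\<^sub>v 0\<^sub>v r = 0\<^sub>v n" by (rule eq_vecI) (use V in auto)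
        have "A *\<^sub>v y = 1\<^sub>m n *\<^sub>v y - (V * Y) *\<^sub>v y"
          unfolding A_def by (rule minus_mult_distrib_mat_vec[OF one_carrier_mat VY y])
        also have "(V * Y) *\<^sub>v y = 0\<^sub>v n" using assoc_mult_mat_vec[OF V Y y] Yy V0 by simp
        finally have "A *\<^sub>v y = y" using y by simp
        then show "y \<in> colspan A" unfolding colspan_eq[OF A] using y by auto
      qed
    qed
    show "\<exists>k. \<exists>A \<in> carrier_mat n k. colspan A = mat_kernel Y \<and> colspan Yt = colspan (Yt * A)"
    proof (intro exI[of _ n] bexI[of _ A] conjI)
      show "colspan Yt = colspan (Yt * A)" unfolding YtA ..
    qed (use A cA in auto)
  next
    assume "\<exists>k. \<exists>A \<in> carrier_mat n k. colspan A = mat_kernel Y \<and> colspan Yt = colspan (Yt * A)"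
    then obtain k A where A: "A \<in> carrier_mat n k" and cA: "colspan A = mat_kernel Y"
      and cYt: "colspan Yt = colspan (Yt * A)" by blast
    have YtA: "Yt * A \<in> carrier_mat (m - r) k" using Yt A by auto
    have col: "P *\<^sub>v unit_vec m j = unit_vec m j" if j: "j < r" for j
    proof -
      obtain w where w: "w \<in> carrier_vec n" and Yw: "Y *\<^sub>v w = unit_vec r j"
        using rank_surj[OF Y rkY, of "unit_vec r j"] by auto
      have "Yt *\<^sub>v w \<in> colspan Yt" unfolding colspan_eq[OF Yt] using w Yt by auto
      then obtain c where c: "c \<in> carrier_vec k" and Yc: "(Yt * A) *\<^sub>v c = Yt *\<^sub>v w"
        unfolding cYt colspan_eq[OF YtA] by auto
      have Ac: "A *\<^sub>v c \<in> carrier_vec n" using A c by auto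
      have "A *\<^sub>v c \<in> colspan A" unfolding colspan_eq[OF A] using A c by auto
      then have YAc: "Y *\<^sub>v (A *\<^sub>v c) = 0\<^sub>v r" unfolding cA using mat_kernelD[OF Y] by blast
      define v where "v = w - A *\<^sub>v c"
      have v: "v \<in> carrier_vec n" unfolding v_def using w Ac by auto
      have Yv: "Y *\<^sub>v v = unit_vec r j"
        unfolding v_def using mult_minus_distrib_mat_vec[OF Y w Ac] Yw YAc by simp
      have Ytv: "Yt *\<^sub>v v = 0\<^sub>v (m - r)"
      proof -
        have z: "Yt *\<^sub>v w - Yt *\<^sub>v w = 0\<^sub>v (m - r)" by (rule eq_vecI) (use Yt w in auto)
        show ?thesis unfolding v_def using mult_minus_distrib_mat_vec[OF Yt w Ac] Yc Yt A c z by simp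
      qed
      have Xv: "X *\<^sub>v v = unit_vec m j"
        unfolding Xd mat_mult_append[OF Y Yt v] Yv Ytv
        by (rule eq_vecI) (use j rm in auto)
      have "P *\<^sub>v (X *\<^sub>v v) = X *\<^sub>v v"
        using PX P X v by (metis assoc_mult_mat_vec)
      then show ?thesis unfolding Xv .
    qed
    show "submatrix P {..<r} {..<r} = 1\<^sub>m r"
    proof (rule eq_matI)
      fix i j assume "i < dim_row (1\<^sub>m r :: complex mat)" "j < dim_col (1\<^sub>m r :: complex mat)"
      then have ij: "i < r" "j < r" by auto
      have "P $$ (i,j) = (P *\<^sub>v unit_vec m j) $ i" using P ij rm by simp
      then show "submatrix P {..<r} {..<r} $$ (i,j) = 1\<^sub>m r $$ (i,j)"
        using subidx[OF ij] col[OF ij(2)] ij rm by simp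
    qed (use subdim in auto)
  qed
qed

end
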